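(* Let $\mu>0$, $1\le p<+\infty$ and $f\in L^p_\mu([0,1])$. Then for every $n\in\mathbb{N}$, $\|\mathscr{L}_n^K f\|_{p,\mu}^p\le K_\mu\,\|f\|_{p,\mu}^p$ with $K_\mu:=1+\frac{1}{1+\mu}$, and $\|\mathscr{L}_n^K f-f\|_{p,\mu}\to 0$ as $n\to+\infty$.
   Context: Fix $\mu>0$. Let $\ln_\mu(x):=\ln(1+\mu+x)$ for $x\in[0,1]$, and for $f:[0,1]\to\mathbb{R}$ let $f_\mu(x):=f(x)/\ln_\mu(x)$. Let $p_{n,k}(y):=\binom{n}{k}y^k(1-y)^{n-k}$ and $a_{n+1}(x):=\dfrac{\ln\left(1+\frac{x}{(n+1)(1+\mu)}\right)}{\ln\left(1+\frac{1}{(n+1)(1+\mu)}\right)}$, $x\in[0,1]$. For $n\in\mathbb{N}$ define $\mathscr{L}_n^K f(x):=\ln_\mu(x)\sum_{k=0}^n p_{n,k}(a_{n+1}(x))\,(n+1)\int_{k/(n+1)}^{(k+1)/(n+1)} f_\mu(t)\,dt$, $x\in[0,1]$. The weighted space $L^p_\mu([0,1])$ is the space of measurable $f:[0,1]\to\mathbb{R}$ with $\|f\|_{p,\mu}:=\left(\int_0^1|f_\mu(x)|^p\,dx\right)^{1/p}<+\infty$. *)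

theory Defs
  imports "HOL-Analysis.Analysis"
begin

definition ln_mu :: "real \<Rightarrow> real \<Rightarrow> real" where
  "ln_mu \<mu> x = ln (1 + \<mu> + x)"

definition f_mu :: "real \<Rightarrow> (real \<Rightarrow> real) \<Rightarrow> real \<Rightarrow> real" where
  "f_mu \<mu> f x = f x / ln_mu \<mu> x"

definition bern_basis :: "nat \<Rightarrow> nat \<Rightarrow> real \<Rightarrow> real" where
  "bern_basis n k y = real (n choose k) * y ^ k * (1 - y) ^ (n - k)"

definition a_seq :: "real \<Rightarrow> nat \<Rightarrow> real \<Rightarrow> real" where
  "a_seq \<mu> m x = ln (1 + x / (real m * (1 + \<mu>))) / ln (1 + 1 / (real m * (1 + \<mu>)))"

definition kant_op :: "real \<Rightarrow> nat \<Rightarrow> (real \<Rightarrow> real) \<Rightarrow> real \<Rightarrow> real" where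
  "kant_op \<mu> n f x = ln_mu \<mu> x *
     (\<Sum>k=0..n. bern_basis n k (a_seq \<mu> (n+1) x) *
        (real (n+1) * (LINT t:{real k / real (n+1) .. real (k+1) / real (n+1)}|lebesgue. f_mu \<mu> f t)))"

definition wnorm_pow :: "real \<Rightarrow> real \<Rightarrow> (real \<Rightarrow> real) \<Rightarrow> real" where
  "wnorm_pow \<mu> p f = (LINT x:{0..1}|lebesgue. \<bar>f_mu \<mu> f x\<bar> powr p)"

definition wnorm :: "real \<Rightarrow> real \<Rightarrow> (real \<Rightarrow> real) \<Rightarrow> real" where
  "wnorm \<mu> p f = wnorm_pow \<mu> p f powr (1 / p)"

definition in_Lp_mu :: "real \<Rightarrow> real \<Rightarrow> (real \<Rightarrow> real) \<Rightarrow> bool" where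
  "in_Lp_mu \<mu> p f \<longleftrightarrow> f \<in> borel_measurable (restrict_space lebesgue {0..1}) \<and>
     set_integrable lebesgue {0..1} (\<lambda>x. \<bar>f_mu \<mu> f x\<bar> powr p)"

end

theory Submission
  imports Defs
begin


lemma tangent_pos:
  fixes p c t :: real assumes p: "p \<ge> 1" and c: "c > 0"
  shows "\<bar>t\<bar> powr p \<ge> c powr p + (p * c powr (p-1)) * (t - c)"
proof (cases "t > 0")
  case True
  have "(\<lambda>x. x powr p) t - (\<lambda>x. x powr p) c \<ge> (p * c powr (p-1)) * (t - c)"
  proof (rule convex_on_imp_above_tangent[where A="{0<..}"])
    show "convex_on {0<..} (\<lambda>x::real. x powr p)" using powr_convex[OF p] .
    show "((\<lambda>x. x powr p) has_field_derivative p * c powr (p - 1)) (at c within {0<..})"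
      using c by (auto intro!: derivative_eq_intros)
  qed (use c True in \<open>auto simp: interior_open\<close>)
  then show ?thesis using True by simp
next
  case False
  have e: "c powr p = c powr (p-1) * c" using powr_add[of c "p-1" 1] c by simp
  have "c powr p + (p * c powr (p-1)) * (t - c) = c powr (p-1) * (c * (1 - p) + p * t)"
    by (simp add: e algebra_simps)
  also have "\<dots> \<le> 0"
  proof (rule mult_nonneg_nonpos)
    have "c * (1 - p) \<le> 0" using c p by (simp add: mult_nonneg_nonpos)
    moreover have "p * t \<le> 0" using p False by (simp add: mult_nonneg_nonpos)
    ultimately show "c * (1 - p) + p * t \<le> 0" by simp
  qed simp
  finally show ?thesis using powr_ge_zero[of "\<bar>t\<bar>" p] by linarith
qed

definition sgp :: "real \<Rightarrow> real \<Rightarrow> real" where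
  "sgp p c = p * \<bar>c\<bar> powr (p-1) * sgn c"

lemma tangent:
  fixes p c t :: real assumes p: "p \<ge> 1"
  shows "\<bar>t\<bar> powr p \<ge> \<bar>c\<bar> powr p + sgp p c * (t - c)"
proof -
  consider "c = 0" | "c > 0" | "c < 0" by linarith
  then show ?thesis
  proof cases
    case 1 then show ?thesis by (simp add: sgp_def)
  next
    case 2 then show ?thesis using tangent_pos[OF p 2, of t] by (simp add: sgp_def)
  next
    case 3
    have "\<bar>-t\<bar> powr p \<ge> (-c) powr p + (p * (-c) powr (p-1)) * (-t - -c)"
      using tangent_pos[OF p, of "-c" "-t"] 3 by simp
    then show ?thesis using 3 by (simp add: sgp_def algebra_simps)
  qed
qed

lemma jensen_finite:
  fixes w x :: "'a \<Rightarrow> real" assumes p: "p \<ge> 1" and S: "finite S"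
    and w: "\<And>i. i \<in> S \<Longrightarrow> w i \<ge> 0" and sw: "(\<Sum>i\<in>S. w i) = 1"
  shows "\<bar>\<Sum>i\<in>S. w i * x i\<bar> powr p \<le> (\<Sum>i\<in>S. w i * \<bar>x i\<bar> powr p)"
proof -
  define c where "c = (\<Sum>i\<in>S. w i * x i)"
  have "(\<Sum>i\<in>S. w i * (\<bar>c\<bar> powr p + sgp p c * (x i - c))) \<le> (\<Sum>i\<in>S. w i * \<bar>x i\<bar> powr p)"
    by (intro sum_mono mult_left_mono tangent p w)
  moreover have "(\<Sum>i\<in>S. w i * (\<bar>c\<bar> powr p + sgp p c * (x i - c))) = 
      (\<Sum>i\<in>S. w i) * \<bar>c\<bar> powr p + sgp p c * ((\<Sum>i\<in>S. w i * x i) - (\<Sum>i\<in>S. w i) * c)"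
    by (simp add: algebra_simps sum.distrib sum_distrib_left sum_distrib_right sum_subtractf)
  ultimately show ?thesis by (simp add: sw c_def)
qed

lemma two_point:
  fixes u v p :: real assumes p: "p \<ge> 1"
  shows "\<bar>u + v\<bar> powr p \<le> 2 powr p * (\<bar>u\<bar> powr p + \<bar>v\<bar> powr p)"
proof -
  define c where "c = (u+v)/2"
  have "\<bar>u\<bar> powr p + \<bar>v\<bar> powr p \<ge> (\<bar>c\<bar> powr p + sgp p c * (u - c)) + (\<bar>c\<bar> powr p + sgp p c * (v - c))"
    by (intro add_mono tangent p)
  also have "(\<bar>c\<bar> powr p + sgp p c * (u - c)) + (\<bar>c\<bar> powr p + sgp p c * (v - c)) = 2 * \<bar>c\<bar> powr p"
    by (simp add: c_def algebra_simps)
  also have "\<bar>c\<bar> powr p = \<bar>u+v\<bar> powr p / 2 powr p"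
    by (simp add: c_def powr_divide)
  finally have "\<bar>u+v\<bar> powr p \<le> 2 powr p * (\<bar>u\<bar> powr p + \<bar>v\<bar> powr p) / 2"
    by (simp add: field_simps)
  also have "\<dots> \<le> 2 powr p * (\<bar>u\<bar> powr p + \<bar>v\<bar> powr p)" by simp
  finally show ?thesis .
qed

lemma jensen_integral:
  fixes g :: "real \<Rightarrow> real" assumes p: "p \<ge> 1" and ab: "a < b"
    and gi: "g integrable_on {a..b}" and gpi: "(\<lambda>x. \<bar>g x\<bar> powr p) integrable_on {a..b}"
  shows "\<bar>integral {a..b} g / (b - a)\<bar> powr p \<le> integral {a..b} (\<lambda>x. \<bar>g x\<bar> powr p) / (b - a)"
proof -
  define c where "c = integral {a..b} g / (b - a)"
  have "integral {a..b} (\<lambda>x. \<bar>c\<bar> powr p + sgp p c * (g x - c)) \<le> integral {a..b} (\<lambda>x. \<bar>g x\<bar> powr p)"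
    by (intro integral_le tangent p gpi integrable_add integrable_on_mult_right integrable_diff gi) auto
  moreover have "integral {a..b} (\<lambda>x. \<bar>c\<bar> powr p + sgp p c * (g x - c)) = (b - a) * \<bar>c\<bar> powr p"
  proof -
    have "integral {a..b} (\<lambda>x. \<bar>c\<bar> powr p + sgp p c * (g x - c)) =
        (b-a) * \<bar>c\<bar> powr p + sgp p c * (integral {a..b} g - (b - a) * c)"
    proof -
      have i1: "(\<lambda>x. g x - c) integrable_on {a..b}" using gi by (intro integrable_diff) auto
      have "integral {a..b} (\<lambda>x. \<bar>c\<bar> powr p + sgp p c * (g x - c)) =
          integral {a..b} (\<lambda>x. \<bar>c\<bar> powr p) + integral {a..b} (\<lambda>x. sgp p c * (g x - c))"
        by (intro integral_add integrable_on_mult_right i1) auto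
      also have "integral {a..b} (\<lambda>x. sgp p c * (g x - c)) = sgp p c * integral {a..b} (\<lambda>x. g x - c)"
        by simp
      also have "integral {a..b} (\<lambda>x. g x - c) = integral {a..b} g - integral {a..b} (\<lambda>x. c)"
        by (intro integral_diff gi) auto
      finally show ?thesis using ab by simp
    qed
    also have "integral {a..b} g - (b - a) * c = 0" using ab by (simp add: c_def)
    finally show ?thesis by simp
  qed
  ultimately have "(b - a) * \<bar>c\<bar> powr p \<le> integral {a..b} (\<lambda>x. \<bar>g x\<bar> powr p)" by simp
  then show ?thesis unfolding c_def[symmetric] using ab by (simp add: pos_le_divide_eq mult.commute)
qed



lemma bern_integral:
  assumes kn: "k \<le> n"
  shows "(bern_basis n k has_integral 1 / (real n + 1)) {0..1}"
proof -
  have "((\<lambda>t. t powr (real k + 1 - 1) * (1 - t) powr (real (n-k) + 1 - 1)) has_integral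
          Beta (real k + 1) (real (n-k) + 1)) {0..1}"
    by (rule has_integral_Beta_real) auto
  then have "((\<lambda>t. real (n choose k) * (t powr (real k + 1 - 1) * (1 - t) powr (real (n-k) + 1 - 1))) has_integral
          real (n choose k) * Beta (real k + 1) (real (n-k) + 1)) {0..1}"
    by (rule has_integral_mult_right)
  then have h: "((\<lambda>t. real (n choose k) * (t powr (real k + 1 - 1) * (1 - t) powr (real (n-k) + 1 - 1))) has_integral
          real (n choose k) * Beta (real k + 1) (real (n-k) + 1)) {0<..<1}"
    by (simp add: has_integral_Icc_iff_Ioo)
  have "(bern_basis n k has_integral real (n choose k) * Beta (real k + 1) (real (n-k) + 1)) {0<..<1}"
    by (rule has_integral_eq[OF _ h]) (auto simp: bern_basis_def powr_realpow)
  then have h2: "(bern_basis n k has_integral real (n choose k) * Beta (real k + 1) (real (n-k) + 1)) {0..1}"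
    by (simp add: has_integral_Icc_iff_Ioo)
  have "Beta (real k + 1) (real (n-k) + 1) = fact k * fact (n-k) / fact (Suc n)"
  proof -
    have g1: "Gamma (real k + 1) = fact k" using Gamma_fact[of k] by (simp add: add.commute)
    have g2: "Gamma (real (n-k) + 1) = fact (n-k)" using Gamma_fact[of "n-k"] by (simp add: add.commute)
    have g3: "Gamma (real k + 1 + (real (n-k) + 1)) = fact (Suc n)"
    proof -
      have "real k + 1 + (real (n-k) + 1) = 1 + real (Suc n)" using kn by (simp add: of_nat_diff)
      then show ?thesis by (subst \<open>real k + 1 + (real (n-k) + 1) = 1 + real (Suc n)\<close>) (rule Gamma_fact)
    qed
    show ?thesis unfolding Beta_def g1 g2 g3 by simp
  qed
  moreover have "real (n choose k) = fact n / (fact k * fact (n-k))" using binomial_fact[OF kn] by simp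
  ultimately have "real (n choose k) * Beta (real k + 1) (real (n-k) + 1) = fact n / fact (Suc n)"
    by (simp add: field_simps)
  also have "\<dots> = 1 / (real n + 1)"
  proof -
    have "fact (Suc n) = (real n + 1) * (fact n :: real)" by (simp add: fact_Suc)
    moreover have "(fact n :: real) > 0" by simp
    ultimately show ?thesis by simp
  qed
  finally show ?thesis using h2 by simp
qed

definition Amap :: "real \<Rightarrow> real \<Rightarrow> real" where
  "Amap c x = ln (1 + x * c) / ln (1 + c)"

definition Ader :: "real \<Rightarrow> real \<Rightarrow> real" where
  "Ader c x = c / ((1 + x * c) * ln (1 + c))"

lemma ln_lower: "c > 0 \<Longrightarrow> c / (1 + c) \<le> ln (1 + (c::real))"
proof -
  assume c: "c > 0"
  have "ln (1 / (1 + c)) \<le> 1 / (1 + c) - 1" using c by (intro ln_le_minus_one) auto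
  then show ?thesis using c by (simp add: ln_div field_simps)
qed

lemma Amap_0 [simp]: "Amap c 0 = 0" by (simp add: Amap_def)
lemma Amap_1: "c > 0 \<Longrightarrow> Amap c 1 = 1" by (simp add: Amap_def)

lemma Amap_range: assumes c: "c > 0" and x: "0 \<le> x" "x \<le> 1"
  shows "0 \<le> Amap c x" "Amap c x \<le> 1"
proof -
  have l: "ln (1 + c) > 0" using c by simp
  show "0 \<le> Amap c x" using c x l by (simp add: Amap_def)
  have "x * c \<le> 1 * c" using c x by (intro mult_right_mono) auto
  then have "ln (1 + x * c) \<le> ln (1 + c)" using c x by (subst ln_le_cancel_iff) (auto simp: add_pos_nonneg)
  then show "Amap c x \<le> 1" using l by (simp add: Amap_def)
qed

lemma Amap_deriv: assumes c: "c > 0" and x: "0 \<le> x"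
  shows "(Amap c has_real_derivative Ader c x) (at x within S)"
proof -
  have "1 + x * c > 0" using c x by (simp add: add_pos_nonneg)
  moreover have "ln (1 + c) > 0" using c by simp
  moreover have "((\<lambda>x. ln (1 + x * c)) has_real_derivative c / (1 + x * c)) (at x within S)"
    using \<open>1 + x * c > 0\<close> by (auto intro!: derivative_eq_intros)
  ultimately show ?thesis unfolding Amap_def Ader_def
    using DERIV_cdivide[of "\<lambda>x. ln (1 + x * c)" "c / (1 + x * c)" x S "ln (1 + c)"]
    by (simp add: field_simps)
qed

lemma Ader_ge: assumes c: "c > 0" and x: "0 \<le> x" "x \<le> 1"
  shows "1 / (1 + c) \<le> Ader c x"
proof -
  have l: "0 < ln (1 + c)" "ln (1 + c) \<le> c" using c by (auto intro: ln_add_one_self_le_self)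
  have "(1 + x * c) * ln (1 + c) \<le> (1 + c) * c"
    using c x l by (intro mult_mono) (auto simp: mult_left_le_one_le)
  moreover have "(1 + x * c) * ln (1 + c) > 0" using c x l by (simp add: add_pos_nonneg)
  ultimately show ?thesis using c unfolding Ader_def by (simp add: field_simps)
qed

lemma Amap_close: assumes c: "c > 0" and x: "0 \<le> x" "x \<le> 1"
  shows "\<bar>Amap c x - x\<bar> \<le> c"
proof -
  have l: "0 < ln (1 + c)" "ln (1 + c) \<le> c" using c by (auto intro: ln_add_one_self_le_self)
  have l2: "c / (1 + c) \<le> ln (1 + c)" using ln_lower[OF c] .
  have xc: "0 \<le> x * c" using c x by simp
  have u1: "ln (1 + x * c) \<le> x * c" using xc by (intro ln_add_one_self_le_self)
  have u2: "x * c / (1 + x * c) \<le> ln (1 + x * c)"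
  proof (cases "x = 0")
    case False then have "x * c > 0" using c x by simp
    then show ?thesis using ln_lower by blast
  qed simp
  have up: "Amap c x \<le> x * (1 + c)"
  proof -
    have "x * (1 + c) * (c / (1 + c)) = x * c" using c by (simp add: field_simps)
    then have "ln (1 + x * c) \<le> x * (1 + c) * (c / (1 + c))" using u1 by simp
    also have "\<dots> \<le> x * (1 + c) * ln (1 + c)" using l2 x c by (intro mult_left_mono) auto
    finally show ?thesis using l by (simp add: Amap_def divide_le_eq)
  qed
  have lo: "x / (1 + c) \<le> Amap c x"
  proof -
    have "x / (1 + c) * ln (1 + c) \<le> x / (1 + c) * c" using l x c by (intro mult_left_mono) auto
    also have "\<dots> = x * c / (1 + c)" by simp
    also have "\<dots> \<le> x * c / (1 + x * c)" using x c xc by (intro divide_left_mono) (auto simp: mult_left_le_one_le add_pos_nonneg)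
    also have "\<dots> \<le> ln (1 + x * c)" by (rule u2)
    finally show ?thesis using l by (simp add: Amap_def le_divide_eq)
  qed
  have xcc: "x * c \<le> c" using mult_right_mono[of x 1 c] x c by simp
  have cc: "0 \<le> c * c" by simp
  have "x - c \<le> x / (1 + c)"
  proof -
    have "(x - c) * (1 + c) = x - c * c - c + x * c" by (simp add: algebra_simps)
    then have "(x - c) * (1 + c) \<le> x" using xcc cc by linarith
    then show ?thesis using c by (simp add: le_divide_eq)
  qed
  moreover have "x * (1 + c) \<le> x + c" using xcc by (simp add: algebra_simps)
  ultimately show ?thesis using up lo by linarith
qed

lemma Amap_cont: "c > 0 \<Longrightarrow> continuous_on {0..1} (Amap c)"
  by (rule continuous_on_subset[of "{0..}"], rule DERIV_continuous_on[where D="Ader c"])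
     (auto intro: Amap_deriv)

lemma bern_cont: "continuous_on S (bern_basis n k)"
  unfolding bern_basis_def by (intro continuous_intros)

lemma bern_nonneg: "0 \<le> y \<Longrightarrow> y \<le> 1 \<Longrightarrow> 0 \<le> bern_basis n k y"
  unfolding bern_basis_def by simp

lemma bern_sum: "(\<Sum>k=0..n. bern_basis n k y) = 1"
  using sum_Bernstein[of n y] unfolding bern_basis_def Bernstein_def atLeast0AtMost by simp

lemma bern_Amap_integral:
  assumes c: "c > 0" and kn: "k \<le> n"
  shows "(\<lambda>x. bern_basis n k (Amap c x)) integrable_on {0..1}"
    "integral {0..1} (\<lambda>x. bern_basis n k (Amap c x)) \<le> (1 + c) / (real n + 1)"
proof -
  have cont: "continuous_on {0..1} (\<lambda>x. bern_basis n k (Amap c x))"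
    by (rule continuous_on_compose2[OF bern_cont Amap_cont[OF c]]) auto
  show i1: "(\<lambda>x. bern_basis n k (Amap c x)) integrable_on {0..1}"
    by (rule integrable_continuous_interval[OF cont])
  have sub: "((\<lambda>x. Ader c x *\<^sub>R bern_basis n k (Amap c x)) has_integral
      (integral {Amap c 0..Amap c 1} (bern_basis n k))) {0..1}"
    by (rule has_integral_substitution[where c=0 and d=1])
       (use c Amap_range[OF c] in \<open>auto simp: Amap_1 intro: bern_cont Amap_deriv\<close>)
  then have sub': "((\<lambda>x. Ader c x * bern_basis n k (Amap c x)) has_integral 1 / (real n + 1)) {0..1}"
    using bern_integral[OF kn] c by (simp add: Amap_1 integral_unique)
  have "integral {0..1} (\<lambda>x. bern_basis n k (Amap c x)) \<le>
        integral {0..1} (\<lambda>x. (1 + c) * (Ader c x * bern_basis n k (Amap c x)))"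
  proof (rule integral_le[OF i1])
    show "(\<lambda>x. (1 + c) * (Ader c x * bern_basis n k (Amap c x))) integrable_on {0..1}"
      using sub' by (intro integrable_on_mult_right) auto
    fix x :: real assume x: "x \<in> {0..1}"
    have b: "0 \<le> bern_basis n k (Amap c x)" using Amap_range[OF c] x by (intro bern_nonneg) auto
    have "1 \<le> (1 + c) * Ader c x" using Ader_ge[OF c] x c by (auto simp: field_simps)
    then have "1 * bern_basis n k (Amap c x) \<le> ((1 + c) * Ader c x) * bern_basis n k (Amap c x)"
      using b by (intro mult_right_mono) auto
    then show "bern_basis n k (Amap c x) \<le> (1 + c) * (Ader c x * bern_basis n k (Amap c x))"
      by (simp add: mult.assoc)
  qed
  also have "\<dots> = (1 + c) / (real n + 1)"
    using integral_unique[OF sub'] by simp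
  finally show "integral {0..1} (\<lambda>x. bern_basis n k (Amap c x)) \<le> (1 + c) / (real n + 1)" .
qed

lemma partition_sum:
  fixes h :: "real \<Rightarrow> real"
  assumes h: "h integrable_on {0..1}"
  shows "(\<Sum>k=0..n. integral {real k / (real n + 1)..(real k + 1) / (real n + 1)} h) = integral {0..1} h"
proof -
  have "m \<le> n + 1 \<Longrightarrow> (\<Sum>k<m. integral {real k / (real n + 1)..(real k + 1) / (real n + 1)} h)
     = integral {0..real m / (real n + 1)} h" for m
  proof (induction m)
    case 0 then show ?case by simp
  next
    case (Suc m)
    have le: "real m / (real n + 1) \<le> (real m + 1) / (real n + 1)" by (simp add: divide_right_mono)
    have le1: "(real m + 1) / (real n + 1) \<le> 1" using Suc.prems by simp
    have "integral {0..real m / (real n + 1)} h + integral {real m / (real n + 1)..(real m + 1) / (real n + 1)} h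
        = integral {0..(real m + 1) / (real n + 1)} h"
      using Henstock_Kurzweil_Integration.integral_combine[where a=0 and c="real m / (real n + 1)" and b="(real m + 1) / (real n + 1)" and f=h] le le1
        integrable_subinterval_real[OF h, of 0 "(real m + 1) / (real n + 1)"] by simp
    then show ?case using Suc by (simp add: add.commute)
  qed
  from this[of "n+1"] show ?thesis
    by (simp add: atLeast0AtMost lessThan_Suc_atMost[symmetric] add.commute)
qed



definition Ik :: "nat \<Rightarrow> nat \<Rightarrow> real set" where
  "Ik n k = {real k / real (n+1) .. real (k+1) / real (n+1)}"

definition TTc :: "real \<Rightarrow> nat \<Rightarrow> (real \<Rightarrow> real) \<Rightarrow> real \<Rightarrow> real" where
  "TTc c n g x = (\<Sum>k=0..n. bern_basis n k (Amap c x) * (real (n+1) * integral (Ik n k) g))"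

lemma Ik_sub: "k \<le> n \<Longrightarrow> Ik n k \<subseteq> {0..1}"
  unfolding Ik_def by (auto simp: divide_le_eq_1 intro: order_trans)

lemma Ik_le: "real k / real (n+1) \<le> real (k+1) / real (n+1)"
  by (simp add: divide_right_mono)

lemma Ik_integrable: "(g::real\<Rightarrow>real) integrable_on {0..1} \<Longrightarrow> k \<le> n \<Longrightarrow> g integrable_on Ik n k"
proof -
  assume g: "g integrable_on {0..1}" and k: "k \<le> n"
  show ?thesis using integrable_subinterval_real[OF g Ik_sub[OF k, unfolded Ik_def]] unfolding Ik_def .
qed

lemma TTc_cont: assumes c: "c > 0" shows "continuous_on {0..1} (TTc c n g)"
proof -
  have "continuous_on {0..1} (\<lambda>x. bern_basis n k (Amap c x))" for k
    by (rule continuous_on_compose2[OF bern_cont Amap_cont[OF c]]) auto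
  then show ?thesis unfolding TTc_def by (intro continuous_intros) auto
qed

lemma TTc_bound:
  assumes c: "c > 0" and p: "p \<ge> 1" and g: "g integrable_on {0..1}"
    and gp: "(\<lambda>x. \<bar>g x\<bar> powr p) integrable_on {0..1}"
  shows "(\<lambda>x. \<bar>TTc c n g x\<bar> powr p) integrable_on {0..1}"
    "integral {0..1} (\<lambda>x. \<bar>TTc c n g x\<bar> powr p) \<le> (1 + c) * integral {0..1} (\<lambda>x. \<bar>g x\<bar> powr p)"
proof -
  have contT: "continuous_on {0..1} (\<lambda>x. \<bar>TTc c n g x\<bar> powr p)"
    using p by (intro continuous_on_powr' continuous_intros TTc_cont[OF c]) auto
  show i1: "(\<lambda>x. \<bar>TTc c n g x\<bar> powr p) integrable_on {0..1}"
    by (rule integrable_continuous_interval[OF contT])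
  define J where "J k = integral (Ik n k) (\<lambda>x. \<bar>g x\<bar> powr p)" for k
  have J0: "0 \<le> J k" if "k \<le> n" for k
    unfolding J_def using Ik_integrable[OF gp that] by (rule integral_nonneg) auto
  have bc: "continuous_on {0..1} (\<lambda>x. bern_basis n k (Amap c x))" for k
    by (rule continuous_on_compose2[OF bern_cont Amap_cont[OF c]]) auto
  define R where "R x = (\<Sum>k=0..n. bern_basis n k (Amap c x) * (real (n+1) * J k))" for x
  have Ri: "(\<lambda>x. bern_basis n k (Amap c x) * (real (n+1) * J k)) integrable_on {0..1}" for k
    by (intro integrable_on_mult_left integrable_continuous_interval bc)
  have pw: "\<bar>TTc c n g x\<bar> powr p \<le> R x" if x: "x \<in> {0..1}" for x
  proof -
    have w0: "0 \<le> bern_basis n k (Amap c x)" for k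
      using Amap_range[OF c] x by (intro bern_nonneg) auto
    have "\<bar>TTc c n g x\<bar> powr p \<le> (\<Sum>k=0..n. bern_basis n k (Amap c x) * \<bar>real (n+1) * integral (Ik n k) g\<bar> powr p)"
      unfolding TTc_def by (rule jensen_finite[OF p]) (auto simp: w0 bern_sum)
    also have "\<dots> \<le> R x" unfolding R_def
    proof (intro sum_mono mult_left_mono w0)
      fix k assume k: "k \<in> {0..n}"
      have lt: "real k / real (n+1) < real (k+1) / real (n+1)" by (simp add: divide_strict_right_mono)
      have len: "real (k+1) / real (n+1) - real k / real (n+1) = 1 / real (n+1)"
        by (simp add: diff_divide_distrib[symmetric])
      have "\<bar>integral (Ik n k) g / (real (k+1) / real (n+1) - real k / real (n+1))\<bar> powr p
          \<le> J k / (real (k+1) / real (n+1) - real k / real (n+1))"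
        unfolding J_def Ik_def
        by (rule jensen_integral[OF p lt]) (use Ik_integrable[OF g] Ik_integrable[OF gp] k in \<open>auto simp: Ik_def\<close>)
      then show "\<bar>real (n+1) * integral (Ik n k) g\<bar> powr p \<le> real (n+1) * J k"
        unfolding len by (simp add: mult.commute)
    qed
    finally show ?thesis .
  qed
  have "integral {0..1} (\<lambda>x. \<bar>TTc c n g x\<bar> powr p) \<le> integral {0..1} R"
    using i1 pw unfolding R_def by (intro integral_le integrable_sum Ri) auto
  also have "integral {0..1} R = (\<Sum>k=0..n. integral {0..1} (\<lambda>x. bern_basis n k (Amap c x) * (real (n+1) * J k)))"
    unfolding R_def by (rule integral_sum) (simp_all only: finite_atLeastAtMost Ri)
  also have "\<dots> = (\<Sum>k=0..n. integral {0..1} (\<lambda>x. bern_basis n k (Amap c x)) * (real (n+1) * J k))"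
    by (intro sum.cong refl integral_mult_left)
  also have "\<dots> \<le> (\<Sum>k=0..n. (1 + c) / (real n + 1) * (real (n+1) * J k))"
    using bern_Amap_integral[OF c] J0 by (intro sum_mono mult_right_mono) auto
  also have "\<dots> = (\<Sum>k=0..n. (1 + c) * J k)"
    by (intro sum.cong refl) (simp add: field_simps)
  also have "\<dots> = (1 + c) * (\<Sum>k=0..n. J k)"
    by (simp add: sum_distrib_left)
  also have "(\<Sum>k=0..n. J k) = integral {0..1} (\<lambda>x. \<bar>g x\<bar> powr p)"
    using partition_sum[OF gp, of n] unfolding J_def Ik_def by (simp add: add.commute)
  finally show "integral {0..1} (\<lambda>x. \<bar>TTc c n g x\<bar> powr p) \<le> (1 + c) * integral {0..1} (\<lambda>x. \<bar>g x\<bar> powr p)" .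
qed



lemma bern_var: "(\<Sum>k=0..n. bern_basis n k y * (real k - real n * y)^2) = real n * y * (1 - y)"
proof -
  have e: "(\<Sum>k=0..n. bern_basis n k y * (real k - real n * y)^2) =
    (\<Sum>k\<le>n. real k * (real k - 1) * Bernstein n k y) + (1 - 2 * real n * y) * (\<Sum>k\<le>n. real k * Bernstein n k y)
     + (real n * y)^2 * (\<Sum>k\<le>n. Bernstein n k y)"
    unfolding sum_distrib_left sum.distrib[symmetric] atLeast0AtMost
    by (intro sum.cong refl) (simp add: bern_basis_def Bernstein_def algebra_simps power2_eq_square)
  show ?thesis unfolding e sum_kk_Bernstein sum_k_Bernstein sum_Bernstein
    by (simp add: algebra_simps power2_eq_square)
qed

lemma sq_sum_le: "((a::real) + b)^2 \<le> 2 * a^2 + 2 * b^2"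
proof -
  have "0 \<le> (a - b)^2" by simp
  then show ?thesis by (simp add: power2_eq_square algebra_simps)
qed

lemma wsum_bound:
  fixes w z D :: "nat \<Rightarrow> real"
  assumes "\<And>k. k \<le> n \<Longrightarrow> 0 \<le> w k" "\<And>k. k \<le> n \<Longrightarrow> \<bar>z k\<bar> \<le> D k"
  shows "\<bar>\<Sum>k=0..n. w k * z k\<bar> \<le> (\<Sum>k=0..n. w k * D k)"
proof -
  have "\<bar>\<Sum>k=0..n. w k * z k\<bar> \<le> (\<Sum>k=0..n. \<bar>w k * z k\<bar>)" by (rule sum_abs)
  also have "\<dots> \<le> (\<Sum>k=0..n. w k * D k)"
  proof (rule sum_mono)
    fix k assume "k \<in> {0..n}"
    then show "\<bar>w k * z k\<bar> \<le> w k * D k" using assms[of k] by (simp add: abs_mult mult_left_mono)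
  qed
  finally show ?thesis .
qed

lemma Ik_close:
  assumes n: "n \<ge> 1" and t: "real k / real (n+1) \<le> t" "t \<le> real (k+1) / real (n+1)" and t1: "t \<le> 1"
  shows "\<bar>t - real k / real n\<bar> \<le> 1 / real n"
proof -
  have np: "real n > 0" "real n + 1 > 0" using n by auto
  have a: "real k \<le> t * (real n + 1)" using t(1) np by (simp add: divide_le_eq add.commute)
  have b: "t * (real n + 1) \<le> real k + 1" using t(2) np by (simp add: le_divide_eq add.commute)
  have "0 \<le> real k / real (n+1)" by simp
  then have t0: "0 \<le> t" using t(1) by linarith
  have "real n * t - real k \<le> 1" using a b t0 by (simp add: algebra_simps)
  moreover have "real k - real n * t \<le> 1" using a t1 by (simp add: algebra_simps)
  ultimately have "\<bar>real n * t - real k\<bar> \<le> 1" by simp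
  moreover have "t - real k / real n = (real n * t - real k) / real n" using np by (simp add: field_simps)
  ultimately show ?thesis using np by (simp add: divide_right_mono)
qed

lemma TTc_uniform:
  fixes h :: "real \<Rightarrow> real"
  assumes h: "continuous_on {0..1} h" and e: "e > 0"
  shows "\<exists>N. \<forall>n\<ge>N. \<forall>c. 0 < c \<longrightarrow> c \<le> 1 / real n \<longrightarrow> (\<forall>x\<in>{0..1}. \<bar>TTc c n h x - h x\<bar> \<le> e)"
proof -
  obtain M where M: "M > 0" "\<And>x. x \<in> {0..1} \<Longrightarrow> \<bar>h x\<bar> \<le> M"
    using compact_imp_bounded[OF compact_continuous_image[OF h compact_Icc]] unfolding bounded_pos by auto
  have uc: "uniformly_continuous_on {0..1} h" by (rule compact_uniformly_continuous[OF h compact_Icc])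
  have "\<exists>d>0. \<forall>x\<in>{0..1}. \<forall>x'\<in>{0..1}. dist x' x < d \<longrightarrow> dist (h x') (h x) < e/2"
    using uc e unfolding uniformly_continuous_on_def by (meson half_gt_zero)
  then obtain d where d: "d > 0" "\<And>x x'. x \<in> {0..1} \<Longrightarrow> x' \<in> {0..1} \<Longrightarrow> dist x' x < d \<Longrightarrow> dist (h x') (h x) < e/2"
    by blast
  define K where "K = 2 * M / d^2"
  have K: "K > 0" using M d by (simp add: K_def)
  have quad: "\<bar>h s - h x\<bar> \<le> e/2 + K * (s - x)^2" if s: "s \<in> {0..1}" and x: "x \<in> {0..1}" for s x
  proof (cases "\<bar>s - x\<bar> < d")
    case True
    then have "\<bar>h s - h x\<bar> < e/2" using d(2)[OF x s] by (simp add: dist_real_def)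
    moreover have "0 \<le> K * (s - x)^2" using K by simp
    ultimately show ?thesis by linarith
  next
    case False
    then have "d \<le> \<bar>s - x\<bar>" by simp
    then have "d^2 \<le> \<bar>s - x\<bar>^2" using d by (intro power_mono) auto
    then have "d^2 \<le> (s - x)^2" by simp
    then have "2 * M \<le> K * (s - x)^2" using d M by (simp add: K_def field_simps)
    moreover have "\<bar>h s - h x\<bar> \<le> 2 * M" using M(2)[OF s] M(2)[OF x] by linarith
    moreover have "0 \<le> e" using e by simp
    ultimately show ?thesis by linarith
  qed
  obtain N :: nat where N: "N \<ge> 1" "20 * K / real N \<le> e / 2"
  proof -
    obtain N0 :: nat where "real N0 > 40 * K / e" using reals_Archimedean2 by blast
    then have "real (N0 + 1) > 40 * K / e" by simp
    then have "20 * K / real (N0 + 1) \<le> e / 2" using e K by (simp add: field_simps)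
    then show ?thesis using that[of "N0+1"] by simp
  qed
  show ?thesis
  proof (intro exI allI impI ballI)
    fix n c x assume nN: "N \<le> n" and c: "0 < c" "c \<le> 1 / real n" and x: "x \<in> {(0::real)..1}"
    have n1: "n \<ge> 1" using N nN by simp
    have np: "real n > 0" using n1 by simp
    define y where "y = Amap c x"
    have y: "0 \<le> y" "y \<le> 1" using Amap_range[OF c(1)] x by (auto simp: y_def)
    have yx: "\<bar>y - x\<bar> \<le> 1 / real n" using Amap_close[OF c(1)] x c(2) by (force simp: y_def)
    define D where "D k = e/2 + K * (8 / real n ^ 2 + 2 * (real k / real n - y)^2)" for k
    have trm: "\<bar>real (n+1) * integral (Ik n k) h - h x\<bar> \<le> D k" if k: "k \<le> n" for k
    proof -
      have hi: "h integrable_on Ik n k"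
        using Ik_integrable[OF integrable_continuous_interval[OF h] k] .
      have len: "Henstock_Kurzweil_Integration.content (Ik n k) = 1 / real (n+1)"
        using Ik_le[of k n] by (simp add: Ik_def diff_divide_distrib[symmetric])
      have pt: "\<bar>h t - h x\<bar> \<le> D k" if t: "t \<in> Ik n k" for t
      proof -
        have t01: "t \<in> {0..1}" using Ik_sub[OF k] t by auto
        have tk: "\<bar>t - real k / real n\<bar> \<le> 1 / real n"
          using Ik_close[OF n1] t t01 by (auto simp: Ik_def)
        have "\<bar>t - x\<bar> \<le> 2 / real n + \<bar>real k / real n - y\<bar>" using tk yx by linarith
        then have "(t - x)^2 \<le> (2 / real n + \<bar>real k / real n - y\<bar>)^2"
          by (metis abs_ge_zero power2_abs power_mono)
        also have "\<dots> \<le> 8 / real n ^ 2 + 2 * (real k / real n - y)^2"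
        proof -
          have "(2 / real n + \<bar>real k / real n - y\<bar>)^2 \<le> 2 * (2 / real n)^2 + 2 * \<bar>real k / real n - y\<bar>^2"
            by (rule sq_sum_le)
          then show ?thesis by (simp add: power_divide)
        qed
        finally have "(t - x)^2 \<le> 8 / real n ^ 2 + 2 * (real k / real n - y)^2" .
        then have "K * (t - x)^2 \<le> K * (8 / real n ^ 2 + 2 * (real k / real n - y)^2)"
          using K by (intro mult_left_mono) auto
        then show ?thesis using quad[OF t01 x] unfolding D_def by linarith
      qed
      have "integral (Ik n k) (\<lambda>t. h t - h x) = integral (Ik n k) h - Henstock_Kurzweil_Integration.content (Ik n k) * h x"
      proof -
        have "integral (Ik n k) (\<lambda>t. h t - h x) = integral (Ik n k) h - integral (Ik n k) (\<lambda>t. h x)"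
          by (rule integral_diff[OF hi]) (auto simp: Ik_def)
        moreover have "integral (Ik n k) (\<lambda>t. h x) = Henstock_Kurzweil_Integration.content (Ik n k) * h x"
          by (simp add: Ik_def)
        ultimately show ?thesis by simp
      qed
      then have eq: "real (n+1) * integral (Ik n k) h - h x = real (n+1) * integral (Ik n k) (\<lambda>t. h t - h x)"
        using len by (simp add: field_simps)
      have "\<bar>integral (Ik n k) (\<lambda>t. h t - h x)\<bar> \<le> integral (Ik n k) (\<lambda>t. D k)"
      proof -
        have hi2: "(\<lambda>t. h t - h x) integrable_on Ik n k" using hi by (intro integrable_diff) (auto simp: Ik_def)
        have ci: "(\<lambda>t. D k) integrable_on Ik n k" unfolding Ik_def by (rule integrable_const_ivl)
        show ?thesis using Henstock_Kurzweil_Integration.integral_norm_bound_integral[OF hi2 ci] pt by simp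
      qed
      also have "\<dots> = D k / real (n+1)" using len by (simp add: Ik_def)
      finally have ib: "\<bar>integral (Ik n k) (\<lambda>t. h t - h x)\<bar> \<le> D k / real (n+1)" .
      have "\<bar>real (n+1) * integral (Ik n k) (\<lambda>t. h t - h x)\<bar> = real (n+1) * \<bar>integral (Ik n k) (\<lambda>t. h t - h x)\<bar>"
        by (simp add: abs_mult)
      also have "\<dots> \<le> real (n+1) * (D k / real (n+1))" using ib by (intro mult_left_mono) auto
      also have "\<dots> = D k" by simp
      finally show ?thesis unfolding eq .
    qed
    have w0: "0 \<le> bern_basis n k y" for k using y by (rule bern_nonneg)
    have "TTc c n h x - h x = (\<Sum>k=0..n. bern_basis n k y * (real (n+1) * integral (Ik n k) h - h x))"
      using bern_sum[of n y] by (simp add: TTc_def y_def right_diff_distrib sum_subtractf flip: sum_distrib_right)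
    then have "\<bar>TTc c n h x - h x\<bar> \<le> (\<Sum>k=0..n. bern_basis n k y * D k)"
      using wsum_bound[of n "\<lambda>k. bern_basis n k y" "\<lambda>k. real (n+1) * integral (Ik n k) h - h x" D] trm w0 by simp
    also have "(\<Sum>k=0..n. bern_basis n k y * D k) = (\<Sum>k=0..n. bern_basis n k y * (e/2 + K * (8 / real n ^ 2)) + 2 * K * (bern_basis n k y * (real k / real n - y)^2))"
      unfolding D_def by (intro sum.cong refl) (simp add: algebra_simps)
    also have "\<dots> = (\<Sum>k=0..n. bern_basis n k y) * (e/2 + K * (8 / real n ^ 2)) + 2 * K * (\<Sum>k=0..n. bern_basis n k y * (real k / real n - y)^2)"
      by (simp only: sum.distrib sum_distrib_left[symmetric] sum_distrib_right[symmetric])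
    also have "\<dots> = e/2 + K * (8 / real n ^ 2) + 2 * K * (\<Sum>k=0..n. bern_basis n k y * (real k / real n - y)^2)"
      by (simp only: bern_sum mult_1_left)
    also have "(\<Sum>k=0..n. bern_basis n k y * (real k / real n - y)^2) = (\<Sum>k=0..n. bern_basis n k y * (real k - real n * y)^2) / real n ^ 2"
      unfolding sum_divide_distrib using np by (intro sum.cong refl) (simp add: field_simps)
    also have "\<dots> = y * (1 - y) / real n" unfolding bern_var using np by (simp add: power2_eq_square)
    finally have b: "\<bar>TTc c n h x - h x\<bar> \<le> e/2 + K * (8 / real n ^ 2) + 2 * K * (y * (1 - y) / real n)" .
    have "y * (1 - y) \<le> 1" using y by (simp add: mult_le_one)
    then have b1: "y * (1 - y) / real n \<le> 1 / real n" using np by (simp add: divide_right_mono)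
    have b2: "8 / real n ^ 2 \<le> 8 / real n" using n1 np by (simp add: frac_le power2_eq_square)
    have "\<bar>TTc c n h x - h x\<bar> \<le> e/2 + K * (8 / real n) + 2 * K * (1 / real n)"
      using b mult_left_mono[OF b1, of "2*K"] mult_left_mono[OF b2, of K] K by linarith
    also have "\<dots> \<le> e/2 + 20 * K / real n" using K np by (simp add: field_simps)
    also have "20 * K / real n \<le> 20 * K / real N" using K N nN by (intro divide_left_mono) auto
    finally show "\<bar>TTc c n h x - h x\<bar> \<le> e" using N by linarith
  qed
qed



lemma S01_leb [simp]: "{0..1::real} \<in> sets lebesgue" by simp

lemma trunc_approx:
  fixes g :: "real \<Rightarrow> real"
  assumes p: "p \<ge> 1" and gm: "g \<in> borel_measurable (lebesgue_on {0..1})"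
    and gp: "(\<lambda>x. \<bar>g x\<bar> powr p) integrable_on {0..1}" and e: "e > 0"
  shows "\<exists>M::nat. (\<lambda>x. \<bar>g x - max (- real M) (min (real M) (g x))\<bar> powr p) integrable_on {0..1} \<and>
           integral {0..1} (\<lambda>x. \<bar>g x - max (- real M) (min (real M) (g x))\<bar> powr p) < e"
proof -
  define F where "F M x = \<bar>g x - max (- real M) (min (real M) (g x))\<bar> powr p" for M :: nat and x
  have Fm: "F M \<in> borel_measurable (lebesgue_on {0..1})" for M
    unfolding F_def using gm by measurable
  have Fb: "norm (F M x) \<le> \<bar>g x\<bar> powr p" for M x
  proof -
    have "\<bar>g x - max (- real M) (min (real M) (g x))\<bar> \<le> \<bar>g x\<bar>" by auto
    then show ?thesis unfolding F_def using p by (simp add: powr_mono2)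
  qed
  have Fi: "F M integrable_on {0..1}" for M
    by (rule measurable_bounded_by_integrable_imp_integrable[OF Fm gp]) (use Fb in auto)
  have Fc: "(\<lambda>M. F M x) \<longlonglongrightarrow> 0" for x
  proof (rule tendsto_eventually)
    obtain N :: nat where N: "\<bar>g x\<bar> \<le> real N" using real_arch_simple by blast
    show "\<forall>\<^sub>F M in sequentially. F M x = 0"
    proof (rule eventually_sequentiallyI[of N])
      fix M assume "N \<le> M"
      then have "\<bar>g x\<bar> \<le> real M" using N by linarith
      then have "max (- real M) (min (real M) (g x)) = g x" by auto
      then show "F M x = 0" by (simp add: F_def)
    qed
  qed
  have "(\<lambda>M. integral {0..1} (F M)) \<longlonglongrightarrow> integral {0..1} (\<lambda>x::real. 0::real)"
    by (rule Equivalence_Lebesgue_Henstock_Integration.dominated_convergence(2)[OF Fi gp]) (use Fb Fc in auto)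
  then have "(\<lambda>M. integral {0..1} (F M)) \<longlonglongrightarrow> 0" by simp
  then obtain M where "\<bar>integral {0..1} (F M) - 0\<bar> < e" using e
    by (metis LIMSEQ_iff real_norm_def le_refl)
  then show ?thesis using Fi[of M] unfolding F_def by (intro exI[of _ M]) auto
qed

lemma bounded_approx:
  fixes G :: "real \<Rightarrow> real"
  assumes p: "p \<ge> 1" and Gm: "G \<in> borel_measurable (lebesgue_on {0..1})"
    and B: "\<And>x. \<bar>G x\<bar> \<le> B" and e: "e > 0"
  shows "\<exists>h. continuous_on UNIV h \<and> (\<lambda>x. \<bar>G x - h x\<bar> powr p) integrable_on {0..1} \<and>
           integral {0..1} (\<lambda>x. \<bar>G x - h x\<bar> powr p) < e"
proof -
  have "G measurable_on {0..1}" using Gm by (simp add: measurable_on_iff_borel_measurable)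
  then obtain N Fn where N: "negligible N" and Fc: "\<And>n. continuous_on UNIV (Fn n)"
    and Fl: "\<And>x. x \<notin> N \<Longrightarrow> (\<lambda>n. Fn n x) \<longlonglongrightarrow> (if x \<in> {0..1} then G x else 0)"
    unfolding measurable_on_def by blast
  define H where "H n x = max (- B) (min B (Fn n x))" for n x
  have Hc: "continuous_on UNIV (H n)" for n unfolding H_def by (intro continuous_intros Fc)
  have Hb: "\<bar>H n x\<bar> \<le> B" for n x using B[of x] by (auto simp: H_def)
  define P where "P n x = \<bar>G x - H n x\<bar> powr p" for n x
  have Pm: "P n \<in> borel_measurable (lebesgue_on {0..1})" for n
  proof -
    have "H n \<in> borel_measurable (lebesgue_on {0..1})"
      by (rule continuous_imp_measurable_on_sets_lebesgue[OF continuous_on_subset[OF Hc]]) auto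
    then show ?thesis unfolding P_def using Gm by measurable
  qed
  have Pb: "norm (P n x) \<le> (2 * B) powr p" for n x
  proof -
    have "\<bar>G x - H n x\<bar> \<le> 2 * B" using B[of x] Hb[of n x] by linarith
    then show ?thesis unfolding P_def using p by (simp add: powr_mono2)
  qed
  have Pi: "P n integrable_on {0..1}" for n
    by (rule measurable_bounded_by_integrable_imp_integrable[OF Pm, of "\<lambda>x. (2 * B) powr p"]) (use Pb in auto)
  define S where "S = {0..1::real} - N"
  have negS: "negligible {x \<in> {0..1} - S. f x \<noteq> 0}" for f :: "real \<Rightarrow> real"
    by (rule negligible_subset[OF N]) (auto simp: S_def)
  have negS2: "negligible {x \<in> S - {0..1}. f x \<noteq> 0}" for f :: "real \<Rightarrow> real"
    by (rule negligible_subset[OF negligible_empty]) (auto simp: S_def)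
  have PiS: "P n integrable_on S" for n
    by (rule integrable_spike_set[OF Pi negS negS2])
  have ciS: "(\<lambda>x. (2 * B) powr p) integrable_on S"
    by (rule integrable_spike_set[OF _ negS negS2]) auto
  have Pl: "(\<lambda>n. P n x) \<longlonglongrightarrow> 0" if x: "x \<in> S" for x
  proof -
    have "(\<lambda>n. Fn n x) \<longlonglongrightarrow> G x" using Fl[of x] x by (auto simp: S_def)
    then have "(\<lambda>n. H n x) \<longlonglongrightarrow> max (- B) (min B (G x))" unfolding H_def
      by (intro tendsto_intros)
    also have "max (- B) (min B (G x)) = G x" using B[of x] by auto
    finally have "(\<lambda>n. G x - H n x) \<longlonglongrightarrow> 0" by (intro tendsto_eq_intros) auto
    then have "(\<lambda>n. \<bar>G x - H n x\<bar>) \<longlonglongrightarrow> 0" using tendsto_rabs_zero by blast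
    then show ?thesis unfolding P_def using p by (intro tendsto_zero_powrI) auto
  qed
  have "(\<lambda>n. integral S (P n)) \<longlonglongrightarrow> integral S (\<lambda>x::real. 0::real)"
    by (rule Equivalence_Lebesgue_Henstock_Integration.dominated_convergence(2)[OF PiS ciS]) (use Pb Pl in auto)
  moreover have "integral S (P n) = integral {0..1} (P n)" for n
    by (rule integral_spike_set[OF negS2 negS])
  ultimately have "(\<lambda>n. integral {0..1} (P n)) \<longlonglongrightarrow> 0" by simp
  then obtain n where "\<bar>integral {0..1} (P n) - 0\<bar> < e" using e
    by (metis LIMSEQ_iff real_norm_def le_refl)
  then show ?thesis using Pi[of n] Hc[of n] unfolding P_def by (intro exI[of _ "H n"]) auto
qed

lemma density_Lp:
  fixes g :: "real \<Rightarrow> real"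
  assumes p: "p \<ge> 1" and gm: "g \<in> borel_measurable (lebesgue_on {0..1})"
    and gp: "(\<lambda>x. \<bar>g x\<bar> powr p) integrable_on {0..1}" and e: "e > 0"
  shows "\<exists>h. continuous_on UNIV h \<and> (\<lambda>x. \<bar>g x - h x\<bar> powr p) integrable_on {0..1} \<and>
           integral {0..1} (\<lambda>x. \<bar>g x - h x\<bar> powr p) < e"
proof -
  define e1 where "e1 = e / (4 * 2 powr p)"
  have e1: "e1 > 0" using e by (simp add: e1_def)
  obtain M :: nat where M1: "(\<lambda>x. \<bar>g x - max (- real M) (min (real M) (g x))\<bar> powr p) integrable_on {0..1}"
    and M2: "integral {0..1} (\<lambda>x. \<bar>g x - max (- real M) (min (real M) (g x))\<bar> powr p) < e1"
    using trunc_approx[OF p gm gp e1] by blast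
  define G where "G x = max (- real M) (min (real M) (g x))" for x
  have Gm: "G \<in> borel_measurable (lebesgue_on {0..1})" unfolding G_def using gm by measurable
  obtain h where hc: "continuous_on UNIV h" and h1: "(\<lambda>x. \<bar>G x - h x\<bar> powr p) integrable_on {0..1}"
    and h2: "integral {0..1} (\<lambda>x. \<bar>G x - h x\<bar> powr p) < e1"
  proof -
    have "\<And>x. \<bar>G x\<bar> \<le> real M" by (auto simp: G_def)
    from bounded_approx[OF p Gm this e1] show ?thesis using that by blast
  qed
  have hm: "h \<in> borel_measurable (lebesgue_on {0..1})"
    by (rule continuous_imp_measurable_on_sets_lebesgue[OF continuous_on_subset[OF hc]]) auto
  have M1': "(\<lambda>x. \<bar>g x - G x\<bar> powr p) integrable_on {0..1}" using M1 by (simp add: G_def)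
  have M2': "integral {0..1} (\<lambda>x. \<bar>g x - G x\<bar> powr p) < e1" using M2 by (simp add: G_def)
  have bnd: "\<bar>g x - h x\<bar> powr p \<le> 2 powr p * (\<bar>g x - G x\<bar> powr p + \<bar>G x - h x\<bar> powr p)" for x
    using two_point[OF p, of "g x - G x" "G x - h x"] by simp
  have Ri: "(\<lambda>x. 2 powr p * (\<bar>g x - G x\<bar> powr p + \<bar>G x - h x\<bar> powr p)) integrable_on {0..1}"
    by (intro integrable_on_mult_right integrable_add M1' h1)
  have i: "(\<lambda>x. \<bar>g x - h x\<bar> powr p) integrable_on {0..1}"
    by (rule measurable_bounded_by_integrable_imp_integrable[OF _ Ri])
       (use gm hm bnd in \<open>auto intro: measurable_abs_powr\<close>)
  have "integral {0..1} (\<lambda>x. \<bar>g x - h x\<bar> powr p) \<le> integral {0..1} (\<lambda>x. 2 powr p * (\<bar>g x - G x\<bar> powr p + \<bar>G x - h x\<bar> powr p))"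
    by (rule integral_le[OF i Ri bnd])
  also have "\<dots> = 2 powr p * (integral {0..1} (\<lambda>x. \<bar>g x - G x\<bar> powr p) + integral {0..1} (\<lambda>x. \<bar>G x - h x\<bar> powr p))"
    using M1' h1 by (simp add: integral_add)
  also have "\<dots> < 2 powr p * (e1 + e1)" using M2' h2 by (intro mult_strict_left_mono) auto
  also have "\<dots> = e / 2" by (simp add: e1_def)
  finally show ?thesis using hc i e by (intro exI[of _ h]) auto
qed



lemma three_point:
  fixes a b d p :: real assumes p: "p \<ge> 1"
  shows "\<bar>a + b + d\<bar> powr p \<le> 4 powr p * (\<bar>a\<bar> powr p + \<bar>b\<bar> powr p + \<bar>d\<bar> powr p)"
proof -
  have "\<bar>a + (b + d)\<bar> powr p \<le> 2 powr p * (\<bar>a\<bar> powr p + \<bar>b + d\<bar> powr p)" by (rule two_point[OF p])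
  also have "\<dots> \<le> 2 powr p * (\<bar>a\<bar> powr p + 2 powr p * (\<bar>b\<bar> powr p + \<bar>d\<bar> powr p))"
    by (intro mult_left_mono add_left_mono two_point[OF p]) auto
  also have "\<dots> = 2 powr p * \<bar>a\<bar> powr p + 4 powr p * (\<bar>b\<bar> powr p + \<bar>d\<bar> powr p)"
  proof -
    have "2 powr p * 2 powr p = (4::real) powr p" by (simp add: powr_mult[symmetric])
    then show ?thesis by (simp add: algebra_simps)
  qed
  also have "\<dots> \<le> 4 powr p * \<bar>a\<bar> powr p + 4 powr p * (\<bar>b\<bar> powr p + \<bar>d\<bar> powr p)"
    using p by (intro add_right_mono mult_right_mono powr_mono2) auto
  finally show ?thesis by (simp add: algebra_simps)
qed

lemma TTc_diff:
  assumes g: "g integrable_on {0..1}" and h: "h integrable_on {0..1}"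
  shows "TTc c n (\<lambda>t. g t - h t) x = TTc c n g x - TTc c n h x"
proof -
  have "integral (Ik n k) (\<lambda>t. g t - h t) = integral (Ik n k) g - integral (Ik n k) h" if "k \<in> {0..n}" for k
    using that by (intro integral_diff Ik_integrable g h) auto
  note eq = this
  have "TTc c n g x - TTc c n h x = (\<Sum>k=0..n. bern_basis n k (Amap c x) * (real (n+1) * integral (Ik n k) g)
      - bern_basis n k (Amap c x) * (real (n+1) * integral (Ik n k) h))"
    unfolding TTc_def by (simp only: sum_subtractf)
  also have "\<dots> = TTc c n (\<lambda>t. g t - h t) x"
    unfolding TTc_def by (intro sum.cong refl) (simp add: eq algebra_simps)
  finally show ?thesis by simp
qed

lemma TTc_meas: "c > 0 \<Longrightarrow> TTc c n g \<in> borel_measurable (lebesgue_on {0..1})"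
  by (rule continuous_imp_measurable_on_sets_lebesgue[OF TTc_cont]) auto

lemma core_conv:
  fixes g :: "real \<Rightarrow> real"
  assumes p: "p \<ge> 1" and mu: "\<mu> > 0" and gm: "g \<in> borel_measurable (lebesgue_on {0..1})"
    and gi: "g integrable_on {0..1}" and gp: "(\<lambda>x. \<bar>g x\<bar> powr p) integrable_on {0..1}"
  defines "c \<equiv> \<lambda>n::nat. 1 / (real (n+1) * (1 + \<mu>))"
  shows "\<And>n. (\<lambda>x. \<bar>TTc (c n) n g x - g x\<bar> powr p) integrable_on {0..1}"
    "(\<lambda>n. integral {0..1} (\<lambda>x. \<bar>TTc (c n) n g x - g x\<bar> powr p)) \<longlonglongrightarrow> 0"
proof -
  have cpos: "c n > 0" for n using mu by (simp add: c_def)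
  have cle: "c n \<le> 1" for n
  proof -
    have "1 * 1 \<le> real (n+1) * (1 + \<mu>)" using mu by (intro mult_mono) auto
    then show ?thesis unfolding c_def by simp
  qed
  show wi: "(\<lambda>x. \<bar>TTc (c n) n g x - g x\<bar> powr p) integrable_on {0..1}" for n
  proof -
    have b: "\<bar>TTc (c n) n g x - g x\<bar> powr p \<le> 2 powr p * (\<bar>TTc (c n) n g x\<bar> powr p + \<bar>g x\<bar> powr p)" for x
      using two_point[OF p, of "TTc (c n) n g x" "- g x"] by simp
    have Ri: "(\<lambda>x. 2 powr p * (\<bar>TTc (c n) n g x\<bar> powr p + \<bar>g x\<bar> powr p)) integrable_on {0..1}"
      by (intro integrable_on_mult_right integrable_add TTc_bound(1)[OF cpos p gi gp] gp)
    show ?thesis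
      by (rule measurable_bounded_by_integrable_imp_integrable[OF _ Ri])
         (use b TTc_meas[OF cpos[of n], of n g] gm in \<open>auto intro: measurable_abs_powr\<close>)
  qed
  show "(\<lambda>n. integral {0..1} (\<lambda>x. \<bar>TTc (c n) n g x - g x\<bar> powr p)) \<longlonglongrightarrow> 0"
  proof (rule LIMSEQ_I)
    fix r :: real assume r: "r > 0"
    define q where "q = 4 powr p"
    have q: "q > 0" by (simp add: q_def)
    define eta where "eta = r / (8 * q)"
    have eta: "eta > 0" using r q by (simp add: eta_def)
    obtain h where hc: "continuous_on UNIV h" and hi1: "(\<lambda>x. \<bar>g x - h x\<bar> powr p) integrable_on {0..1}"
      and hi2: "integral {0..1} (\<lambda>x. \<bar>g x - h x\<bar> powr p) < eta"
      using density_Lp[OF p gm gp eta] by blast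
    have hc01: "continuous_on {0..1} h" using continuous_on_subset[OF hc] by auto
    have hint: "h integrable_on {0..1}" by (rule integrable_continuous_interval[OF hc01])
    have hm: "h \<in> borel_measurable (lebesgue_on {0..1})"
      by (rule continuous_imp_measurable_on_sets_lebesgue[OF hc01]) auto
    have ghi: "(\<lambda>t. g t - h t) integrable_on {0..1}" by (intro integrable_diff gi hint)
    define del where "del = min 1 (r / (4 * q))"
    have del: "del > 0" "del \<le> 1" "q * del \<le> r / 4" using r q by (auto simp: del_def min_def field_simps)
    have delp: "del powr p \<le> del"
      using powr_mono'[of 1 p del] del p by simp
    obtain N where N: "\<And>n c'. n \<ge> N \<Longrightarrow> 0 < c' \<Longrightarrow> c' \<le> 1 / real n \<Longrightarrow> \<forall>x\<in>{0..1}. \<bar>TTc c' n h x - h x\<bar> \<le> del"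
      using TTc_uniform[OF hc01 del(1)] by blast
    show "\<exists>no. \<forall>n\<ge>no. norm (integral {0..1} (\<lambda>x. \<bar>TTc (c n) n g x - g x\<bar> powr p) - 0) < r"
    proof (intro exI allI impI)
      fix n assume nN: "max N 1 \<le> n"
      have n1: "n \<ge> 1" using nN by simp
      have cn: "c n \<le> 1 / real n"
      proof -
        have "real n \<le> real (n+1) * (1 + \<mu>)" using mu by (simp add: algebra_simps add_increasing2)
        then show ?thesis unfolding c_def using n1 by (intro divide_left_mono) auto
      qed
      have unif: "\<bar>TTc (c n) n h x - h x\<bar> \<le> del" if "x \<in> {0..1}" for x
        using N[of n "c n"] nN cpos cn that by auto
      define A where "A x = \<bar>TTc (c n) n (\<lambda>t. g t - h t) x\<bar> powr p" for x
      define B where "B x = \<bar>TTc (c n) n h x - h x\<bar> powr p" for x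
      define D where "D x = \<bar>g x - h x\<bar> powr p" for x
      have Ai: "A integrable_on {0..1}" and Ab: "integral {0..1} A \<le> (1 + c n) * integral {0..1} D"
        using TTc_bound[OF cpos p ghi hi1] unfolding A_def D_def by auto
      have Bm: "B \<in> borel_measurable (lebesgue_on {0..1})"
        unfolding B_def using TTc_meas[OF cpos[of n], of n h] hm by measurable
      have Bb: "norm (B x) \<le> del powr p" if "x \<in> {0..1}" for x
        unfolding B_def using unif[OF that] p by (simp add: powr_mono2)
      have Bi: "B integrable_on {0..1}"
        by (rule measurable_bounded_by_integrable_imp_integrable[OF Bm, of "\<lambda>x. del powr p"]) (use Bb in auto)
      have Bint: "integral {0..1} B \<le> del powr p"
      proof -
        have "integral {0..1} B \<le> integral {0..1} (\<lambda>x::real. del powr p)"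
          by (rule integral_le[OF Bi]) (use Bb in \<open>auto simp: abs_le_iff\<close>)
        then show ?thesis by simp
      qed
      have Di: "D integrable_on {0..1}" using hi1 unfolding D_def .
      have Dint: "integral {0..1} D < eta" using hi2 unfolding D_def .
      have D0: "0 \<le> integral {0..1} D" using Di by (rule integral_nonneg) (simp add: D_def)
      have pw: "\<bar>TTc (c n) n g x - g x\<bar> powr p \<le> q * (A x + B x + D x)" for x
      proof -
        have "TTc (c n) n g x - g x = TTc (c n) n (\<lambda>t. g t - h t) x + (TTc (c n) n h x - h x) + (h x - g x)"
          using TTc_diff[OF gi hint] by simp
        then have "\<bar>TTc (c n) n g x - g x\<bar> powr p \<le> q * (A x + B x + \<bar>h x - g x\<bar> powr p)"
          unfolding q_def A_def B_def using three_point[OF p] by metis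
        then show ?thesis unfolding D_def by (simp add: abs_minus_commute)
      qed
      have Ri: "(\<lambda>x. q * (A x + B x + D x)) integrable_on {0..1}"
        by (intro integrable_on_mult_right integrable_add Ai Bi Di)
      have "integral {0..1} (\<lambda>x. \<bar>TTc (c n) n g x - g x\<bar> powr p) \<le> integral {0..1} (\<lambda>x. q * (A x + B x + D x))"
        by (rule integral_le[OF wi Ri]) (use pw in auto)
      also have "\<dots> = q * (integral {0..1} A + integral {0..1} B + integral {0..1} D)"
        using Ai Bi Di by (simp add: integral_add integrable_add)
      also have "\<dots> \<le> q * ((1 + c n) * integral {0..1} D + del + integral {0..1} D)"
        using Ab Bint delp q by (intro mult_left_mono add_mono) auto
      also have "\<dots> \<le> q * (3 * eta + del)"
      proof -
        have "(1 + c n) * integral {0..1} D \<le> 2 * integral {0..1} D"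
          using cle[of n] D0 by (intro mult_right_mono) auto
        then show ?thesis using Dint q by (intro mult_left_mono) auto
      qed
      also have "\<dots> = 3 * q * eta + q * del" by (simp add: algebra_simps)
      also have "3 * q * eta = 3 * r / 8" using q by (simp add: eta_def)
      finally have "integral {0..1} (\<lambda>x. \<bar>TTc (c n) n g x - g x\<bar> powr p) \<le> 3 * r / 8 + q * del" .
      moreover have "0 \<le> integral {0..1} (\<lambda>x. \<bar>TTc (c n) n g x - g x\<bar> powr p)"
        using wi by (rule integral_nonneg) auto
      ultimately show "norm (integral {0..1} (\<lambda>x. \<bar>TTc (c n) n g x - g x\<bar> powr p) - 0) < r"
        using del(3) r by simp
    qed
  qed
qed



lemma ln_mu_pos: "\<mu> > 0 \<Longrightarrow> x \<ge> 0 \<Longrightarrow> ln_mu \<mu> x > 0"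
  unfolding ln_mu_def by simp

lemma abs_le_powr: "p \<ge> 1 \<Longrightarrow> \<bar>y::real\<bar> \<le> 1 + \<bar>y\<bar> powr p"
proof (cases "\<bar>y\<bar> \<le> 1")
  case True then show ?thesis using powr_ge_zero[of "\<bar>y\<bar>" p] by linarith
next
  case False
  assume p: "p \<ge> 1"
  have "\<bar>y\<bar> powr 1 \<le> \<bar>y\<bar> powr p" using False p by (intro powr_mono) auto
  then show ?thesis using False by simp
qed

theorem theorem3p2:
  fixes \<mu> p :: real and f :: "real \<Rightarrow> real"
  assumes "\<mu> > 0" and "1 \<le> p" and "in_Lp_mu \<mu> p f"
  shows "(\<forall>n::nat. n \<ge> 1 \<longrightarrow>
            wnorm_pow \<mu> p (kant_op \<mu> n f) \<le> (1 + 1 / (1 + \<mu>)) * wnorm_pow \<mu> p f)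
       \<and> ((\<lambda>n. wnorm \<mu> p (\<lambda>x. kant_op \<mu> n f x - f x)) \<longlonglongrightarrow> 0)"
proof -
  have mu: "\<mu> > 0" and p: "p \<ge> 1" using assms by auto
  have fm: "f \<in> borel_measurable (lebesgue_on {0..1})"
    and gpi: "set_integrable lebesgue {0..1} (\<lambda>x. \<bar>f_mu \<mu> f x\<bar> powr p)"
    using assms(3) unfolding in_Lp_mu_def by auto
  define g where "g = f_mu \<mu> f"
  have idm: "(\<lambda>x::real. x) \<in> borel_measurable (lebesgue_on {0..1})"
    by (rule continuous_imp_measurable_on_sets_lebesgue) (auto intro: continuous_on_id)
  have gm: "g \<in> borel_measurable (lebesgue_on {0..1})"
    unfolding g_def f_mu_def[abs_def] ln_mu_def using fm idm by measurable
  have gp: "(\<lambda>x. \<bar>g x\<bar> powr p) integrable_on {0..1}"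
    and wf: "wnorm_pow \<mu> p f = integral {0..1} (\<lambda>x. \<bar>g x\<bar> powr p)"
    using set_lebesgue_integral_eq_integral[OF gpi] unfolding wnorm_pow_def g_def by auto
  have gbi: "(\<lambda>x. 1 + \<bar>g x\<bar> powr p) integrable_on {0..1}"
    by (intro integrable_add gp) auto
  have gabs: "g absolutely_integrable_on {0..1}"
    by (rule measurable_bounded_by_integrable_imp_absolutely_integrable[OF gm _ gbi])
       (auto simp: abs_le_powr[OF p])
  have gi: "g integrable_on {0..1}" using set_lebesgue_integral_eq_integral(1)[OF gabs] .
  define c where "c = (\<lambda>n::nat. 1 / (real (n+1) * (1 + \<mu>)))"
  have cpos: "c n > 0" for n using mu by (simp add: c_def)
  have LI: "(LINT t:{real k / real (n+1) .. real (k+1) / real (n+1)}|lebesgue. f_mu \<mu> f t) = integral (Ik n k) g"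
    if "k \<le> n" for n k
  proof -
    have "g absolutely_integrable_on Ik n k"
      by (rule set_integrable_subset[OF gabs]) (use Ik_sub[OF that] in \<open>auto simp: Ik_def\<close>)
    from set_lebesgue_integral_eq_integral(2)[OF this] show ?thesis by (simp add: Ik_def g_def)
  qed
  have aeq: "a_seq \<mu> (n+1) x = Amap (c n) x" for n x
    by (simp add: a_seq_def Amap_def c_def)
  have keq: "kant_op \<mu> n f x = ln_mu \<mu> x * TTc (c n) n g x" for n x
    unfolding kant_op_def TTc_def aeq
    by (intro arg_cong2[where f="(*)"] refl sum.cong) (auto simp only: LI atLeastAtMost_iff)
  have kf: "f_mu \<mu> (kant_op \<mu> n f) x = TTc (c n) n g x" if "x \<in> {0..1}" for n x
    using ln_mu_pos[OF mu, of x] that by (simp add: f_mu_def keq)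
  have kdf: "f_mu \<mu> (\<lambda>x. kant_op \<mu> n f x - f x) x = TTc (c n) n g x - g x" if "x \<in> {0..1}" for n x
    using ln_mu_pos[OF mu, of x] that by (simp add: f_mu_def keq g_def diff_divide_distrib)
  have part1: "wnorm_pow \<mu> p (kant_op \<mu> n f) \<le> (1 + 1 / (1 + \<mu>)) * wnorm_pow \<mu> p f" for n
  proof -
    have ii: "(\<lambda>x. \<bar>TTc (c n) n g x\<bar> powr p) integrable_on {0..1}"
      and ib: "integral {0..1} (\<lambda>x. \<bar>TTc (c n) n g x\<bar> powr p) \<le> (1 + c n) * integral {0..1} (\<lambda>x. \<bar>g x\<bar> powr p)"
      using TTc_bound[OF cpos p gi gp] by auto
    have ai: "(\<lambda>x. \<bar>TTc (c n) n g x\<bar> powr p) absolutely_integrable_on {0..1}"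
      using ii by (subst absolutely_integrable_on_iff_nonneg) auto
    have "wnorm_pow \<mu> p (kant_op \<mu> n f) = (LINT x:{0..1}|lebesgue. \<bar>TTc (c n) n g x\<bar> powr p)"
      unfolding wnorm_pow_def by (rule set_lebesgue_integral_cong) (auto simp: kf)
    also have "\<dots> = integral {0..1} (\<lambda>x. \<bar>TTc (c n) n g x\<bar> powr p)"
      by (rule set_lebesgue_integral_eq_integral(2)[OF ai])
    also have "\<dots> \<le> (1 + c n) * integral {0..1} (\<lambda>x. \<bar>g x\<bar> powr p)" by (rule ib)
    also have "\<dots> \<le> (1 + 1 / (1 + \<mu>)) * integral {0..1} (\<lambda>x. \<bar>g x\<bar> powr p)"
    proof (rule mult_right_mono)
      have "1 * (1 + \<mu>) \<le> real (n+1) * (1 + \<mu>)" using mu by (intro mult_right_mono) auto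
      then have "c n \<le> 1 / (1 + \<mu>)" unfolding c_def using mu by (intro divide_left_mono) auto
      then show "1 + c n \<le> 1 + 1 / (1 + \<mu>)" by simp
      show "0 \<le> integral {0..1} (\<lambda>x. \<bar>g x\<bar> powr p)" using gp by (rule integral_nonneg) auto
    qed
    finally show ?thesis unfolding wf .
  qed
  have cc: "(\<lambda>x. \<bar>TTc (c n) n g x - g x\<bar> powr p) integrable_on {0..1}"
    "(\<lambda>n. integral {0..1} (\<lambda>x. \<bar>TTc (c n) n g x - g x\<bar> powr p)) \<longlonglongrightarrow> 0" for n
    using core_conv[OF p mu gm gi gp] unfolding c_def by auto
  have weq: "wnorm \<mu> p (\<lambda>x. kant_op \<mu> n f x - f x) = integral {0..1} (\<lambda>x. \<bar>TTc (c n) n g x - g x\<bar> powr p) powr (1 / p)" for n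
  proof -
    have ai: "(\<lambda>x. \<bar>TTc (c n) n g x - g x\<bar> powr p) absolutely_integrable_on {0..1}"
      using cc(1)[of n] by (subst absolutely_integrable_on_iff_nonneg) auto
    have "wnorm_pow \<mu> p (\<lambda>x. kant_op \<mu> n f x - f x) = (LINT x:{0..1}|lebesgue. \<bar>TTc (c n) n g x - g x\<bar> powr p)"
      unfolding wnorm_pow_def by (rule set_lebesgue_integral_cong) (auto simp: kdf)
    also have "\<dots> = integral {0..1} (\<lambda>x. \<bar>TTc (c n) n g x - g x\<bar> powr p)"
      by (rule set_lebesgue_integral_eq_integral(2)[OF ai])
    finally show ?thesis unfolding wnorm_def by simp
  qed
  have part2: "(\<lambda>n. wnorm \<mu> p (\<lambda>x. kant_op \<mu> n f x - f x)) \<longlonglongrightarrow> 0"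
    unfolding weq
  proof (rule tendsto_zero_powrI[OF cc(2)])
    show "\<forall>\<^sub>F n in sequentially. 0 \<le> integral {0..1} (\<lambda>x. \<bar>TTc (c n) n g x - g x\<bar> powr p)"
      using cc(1) by (intro always_eventually allI integral_nonneg) auto
  qed (use p in auto)
  show ?thesis using part1 part2 by auto
qed

end
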